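(* The Bergman projection $P$ on the bidisc $\mathbb{D}^2$ is not of weak-type $(1,1)$: there is no constant $C>0$ such that for all bounded measurable functions $f$ on $\mathbb{D}^2$ and all $\lambda>0$, $$\left|\{(z_1,z_2)\in\mathbb{D}^2 : |P(f)(z_1,z_2)|>\lambda\}\right| \le \frac{C\,\|f\|_{L^1(\mathbb{D}^2)}}{\lambda}.$$
   Context: $\mathbb{D}$ is the unit disc in $\mathbb{C}$, $\mathbb{D}^2=\mathbb{D}\times\mathbb{D}$, $dV$ is Lebesgue measure and $|U|$ denotes the Lebesgue measure of a set $U$. The Bergman projection on $\mathbb{D}^2$ is the orthogonal projection of $L^2(\mathbb{D}^2)$ onto the closed subspace of square-integrable holomorphic functions; it is given by $P(f)(z)=\int_{\mathbb{D}^2}K_{\mathbb{D}^2}(z;\bar w)f(w)\,dV(w)$ with $K_{\mathbb{D}^2}(z;\bar w)=\prod_{j=1}^2\frac{1}{\pi(1-z_j\bar w_j)^2}$. *)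

theory Defs
  imports "HOL-Analysis.Analysis"
begin

definition bidisc :: "(complex \<times> complex) set" where
  "bidisc = ball 0 1 \<times> ball 0 1"

definition bergman_kernel :: "complex \<times> complex \<Rightarrow> complex \<times> complex \<Rightarrow> complex" where
  "bergman_kernel z w =
     (1 / (of_real pi * (1 - fst z * cnj (fst w))\<^sup>2)) *
     (1 / (of_real pi * (1 - snd z * cnj (snd w))\<^sup>2))"

definition bergman_proj :: "(complex \<times> complex \<Rightarrow> complex) \<Rightarrow> complex \<times> complex \<Rightarrow> complex" where
  "bergman_proj f z = (LINT w | lebesgue_on bidisc. bergman_kernel z w * f w)"

end

theory Submission
  imports Defs
begin

lemma mult_near_one:
  fixes x y :: complex
  assumes "norm (x - 1) \<le> X - 1" "norm (y - 1) \<le> Y - 1" "X \<ge> 1" "Y \<ge> 1"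
  shows "norm (x*y - 1) \<le> X*Y - 1"
proof -
  have "x*y - 1 = (x-1)*(y-1) + (x-1) + (y-1)" by (simp add: algebra_simps)
  hence "norm (x*y-1) \<le> norm ((x-1)*(y-1)) + norm(x-1) + norm (y-1)"
    by (metis norm_triangle_le norm_triangle_ineq add_right_mono)
  hence "norm (x*y-1) \<le> norm (x-1) * norm (y-1) + norm(x-1) + norm (y-1)"
    by (simp add: norm_mult)
  also have "\<dots> \<le> (X-1)*(Y-1) + (X-1) + (Y-1)"
    using assms by (intro add_mono mult_mono) auto
  finally show ?thesis by (simp add: algebra_simps)
qed

lemma kernel_approx:
  fixes A1 A2 B1 B2 :: complex
  assumes "A1 \<noteq> 0" "A2 \<noteq> 0" "norm (B1 - A1) \<le> norm A1 / 20" "norm (B2 - A2) \<le> norm A2 / 20"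
  shows "norm (1/(B1^2*B2^2) - 1/(A1^2*A2^2)) \<le> 1/2 * norm (1/(A1^2*A2^2))"
proof -
  define e1 where "e1 = B1/A1" 
  define e2 where "e2 = B2/A2"
  have n1: "norm (e1 - 1) \<le> 21/20 - 1"
  proof -
    have "e1 - 1 = (B1 - A1)/A1" using assms(1) by (simp add: e1_def field_simps)
    thus ?thesis using assms(1,3) by (simp add: norm_divide divide_le_eq)
  qed
  have n2: "norm (e2 - 1) \<le> 21/20 - 1"
  proof -
    have "e2 - 1 = (B2 - A2)/A2" using assms(2) by (simp add: e2_def field_simps)
    thus ?thesis using assms(2,4) by (simp add: norm_divide divide_le_eq)
  qed
  have q: "norm (e1*e1*(e2*e2) - 1) \<le> (21/20)*(21/20)*((21/20)*(21/20)) - 1"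
    by (intro mult_near_one n1 n2) auto
  define q where "q = e1*e1*(e2*e2)"
  have qn: "norm (q - 1) \<le> 1/4" using q unfolding q_def by simp
  have "norm q \<ge> 3/4"
    using norm_triangle_ineq2[of 1 q] qn by (simp add: norm_minus_commute[of 1 q])
  hence q0: "q \<noteq> 0" by auto
  have b1: "B1 = e1*A1" using assms(1) by (simp add: e1_def)
  have b2: "B2 = e2*A2" using assms(2) by (simp add: e2_def)
  have B: "B1^2*B2^2 = q * (A1^2*A2^2)"
    unfolding b1 b2 q_def by (simp add: power2_eq_square algebra_simps)
  have "1/(B1^2*B2^2) - 1/(A1^2*A2^2) = (1 - q)/q * (1/(A1^2*A2^2))"
    using q0 assms(1,2) unfolding B by (simp add: divide_simps)
  hence "norm (1/(B1^2*B2^2) - 1/(A1^2*A2^2)) = norm (q - 1) / norm q * norm (1/(A1^2*A2^2))"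
    by (simp add: norm_mult norm_divide norm_minus_commute[of 1 q])
  also have "\<dots> \<le> (1/4)/(3/4) * norm (1/(A1^2*A2^2))"
    using qn \<open>norm q \<ge> 3/4\<close> by (intro mult_right_mono frac_le) auto
  also have "\<dots> \<le> 1/2 * norm (1/(A1^2*A2^2))"
    by (intro mult_right_mono) auto
  finally show ?thesis .
qed


lemma bidisc_open: "open bidisc" unfolding bidisc_def by (intro open_Times) auto
lemma bidisc_sets[measurable]: "bidisc \<in> sets lborel" using bidisc_open by simp
lemma bidisc_leb[measurable]: "bidisc \<in> sets lebesgue" using bidisc_open by simp
lemma cnj_meas[measurable]: "cnj \<in> borel_measurable borel"
  by (intro borel_measurable_continuous_onI continuous_intros)

lemma kernel_meas2[measurable]: "(\<lambda>x. bergman_kernel (fst x) (snd x)) \<in> borel_measurable borel"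
proof -
  have "(\<lambda>x. bergman_kernel (fst x) (snd x)) \<in> borel_measurable ((borel \<Otimes>\<^sub>M borel) \<Otimes>\<^sub>M (borel \<Otimes>\<^sub>M borel))"
    unfolding bergman_kernel_def by measurable
  thus ?thesis by (simp add: borel_prod)
qed

lemma kernel_meas[measurable]: "(\<lambda>w. bergman_kernel z w) \<in> borel_measurable borel"
  using measurable_Pair2[OF kernel_meas2[unfolded borel_prod[symmetric]], of z] by (simp add: borel_prod)

lemma "(\<lambda>w. bergman_kernel z w) \<in> borel_measurable (lebesgue_on bidisc)"
  by (rule measurable_restrict_space1) (simp add: measurable_completion)

lemma "A \<in> sets lborel \<Longrightarrow> A \<subseteq> bidisc \<Longrightarrow> A \<in> sets (lebesgue_on bidisc)"
  by (simp add: sets_restrict_space_iff)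

lemma "A \<in> sets lborel \<Longrightarrow> A \<subseteq> bidisc \<Longrightarrow> emeasure (lebesgue_on bidisc) A = emeasure lborel A"
  by (simp add: emeasure_restrict_space)

lemma box_meas: "emeasure lborel (box (Complex a b) (Complex c d)) = (if a \<le> c \<and> b \<le> d then ennreal ((c-a)*(d-b)) else 0)"
  by (simp add: emeasure_lborel_box_eq Basis_complex_def ennreal_mult)

lemma prod_meas: "A \<in> sets lborel \<Longrightarrow> B \<in> sets lborel \<Longrightarrow> emeasure lborel (A \<times> B) = emeasure lborel (A::complex set) * emeasure lborel (B::complex set)"
  by (simp add: lborel_prod[symmetric] lborel.emeasure_pair_measure_Times)

definition Sb :: "real \<Rightarrow> complex set" where
  "Sb s = box (Complex (1-s) (-s/2)) (Complex (1-s/2) (s/2))"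

lemma mem_Sb: "z \<in> Sb s \<longleftrightarrow> 1-s < Re z \<and> Re z < 1-s/2 \<and> -s/2 < Im z \<and> Im z < s/2"
  by (auto simp: Sb_def mem_box Basis_complex_def)

lemma Sb_props:
  fixes s h :: real
  assumes "0 < s" "s \<le> 1" "0 < h" "h \<le> s/2" "z \<in> Sb s"
  shows "norm z < 1" "s/2 < norm (1 - z * complex_of_real (1-h))"
        "norm (1 - z * complex_of_real (1-h)) \<le> 2 * s"
proof -
  have x: "1-s < Re z" "Re z < 1-s/2" and y: "-s/2 < Im z" "Im z < s/2" using assms(5) by (auto simp: mem_Sb)
  have a: "(Re z)^2 < (1-s/2)^2" using power_strict_mono[of "Re z" "1-s/2" 2] x assms(1,2) by auto
  have "\<bar>Im z\<bar> < s/2" using y by auto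
  hence b: "(Im z)^2 < (s/2)^2" using power_strict_mono[of "\<bar>Im z\<bar>" "s/2" 2] by simp
  have "s * s \<le> 2 * s" using assms(1,2) by auto
  hence "(Re z)^2 + (Im z)^2 < 1" using a b by (simp add: power2_eq_square algebra_simps)
  thus "norm z < 1" by (simp add: norm_complex_def)
  have re: "Re (1 - z * complex_of_real (1-h)) = 1 - Re z + h * Re z" by (simp add: algebra_simps)
  have im: "Im (1 - z * complex_of_real (1-h)) = - (Im z * (1-h))" by simp
  have "0 < h * Re z" using x assms by auto
  hence "s/2 < Re (1 - z * complex_of_real (1-h))" using re x by linarith
  thus "s/2 < norm (1 - z * complex_of_real (1-h))" using abs_Re_le_cmod[of "1 - z * complex_of_real (1-h)"] by linarith
  have "h * Re z \<le> h * 1" using x assms by (intro mult_left_mono) auto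
  hence r2: "\<bar>Re (1 - z * complex_of_real (1-h))\<bar> \<le> s + h" using re x \<open>0 < h * Re z\<close> by auto
  have "\<bar>Im z * (1-h)\<bar> \<le> \<bar>Im z\<bar>" using assms by (auto simp: abs_mult intro!: mult_left_le)
  hence "\<bar>Im (1 - z * complex_of_real (1-h))\<bar> \<le> s/2" using im y by auto
  thus "norm (1 - z * complex_of_real (1-h)) \<le> 2 * s" using cmod_le[of "1 - z * complex_of_real (1-h)"] r2 assms by linarith
qed

definition Qb :: "real \<Rightarrow> complex set" where
  "Qb h = box (Complex (1-h-h/40) (-h/40)) (Complex (1-h+h/40) (h/40))"

lemma mem_Qb: "w \<in> Qb h \<longleftrightarrow> 1-h-h/40 < Re w \<and> Re w < 1-h+h/40 \<and> -h/40 < Im w \<and> Im w < h/40"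
  by (auto simp: Qb_def mem_box Basis_complex_def)

lemma Qb_props:
  assumes "0 < h" "h \<le> 1/2" "w \<in> Qb h"
  shows "norm (w - complex_of_real (1-h)) < h/20" "norm w < 1"
proof -
  have m: "1-h-h/40 < Re w" "Re w < 1-h+h/40" "-h/40 < Im w" "Im w < h/40" using assms(3) by (auto simp: mem_Qb)
  have r: "Re (w - complex_of_real (1-h)) = Re w - (1-h)" "Im (w - complex_of_real (1-h)) = Im w" by simp_all
  have "\<bar>Re (w - complex_of_real (1-h))\<bar> < h/40" "\<bar>Im (w - complex_of_real (1-h))\<bar> < h/40"
    unfolding r abs_less_iff using m by linarith+
  thus a: "norm (w - complex_of_real (1-h)) < h/20"
    using cmod_le[of "w - complex_of_real (1-h)"] by linarith
  have "norm w \<le> norm (complex_of_real (1-h)) + norm (w - complex_of_real (1-h))"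
    using norm_triangle_ineq[of "complex_of_real (1-h)" "w - complex_of_real (1-h)"] by simp
  also have "norm (complex_of_real (1-h)) = 1 - h" using assms by (simp only: norm_of_real)
  finally show "norm w < 1" using a assms by linarith
qed

lemma kernel_split:
  "bergman_kernel z w = 1/(complex_of_real pi * complex_of_real pi) *
     (1 / ((1 - fst z * cnj (fst w))^2 * (1 - snd z * cnj (snd w))^2))"
  by (simp add: bergman_kernel_def divide_inverse inverse_mult_distrib mult_ac)

lemma scale_bound:
  fixes X Y c :: complex
  assumes "norm (X - Y) \<le> 1/2 * norm Y"
  shows "norm (c*X - c*Y) \<le> norm (c*Y) / 2"
proof -
  have "norm (c*X - c*Y) = norm c * norm (X - Y)" by (simp add: norm_mult right_diff_distrib[symmetric])
  also have "\<dots> \<le> norm c * (1/2 * norm Y)" using assms by (intro mult_left_mono) auto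
  finally show ?thesis by (simp add: norm_mult)
qed

lemma kernel_near:
  assumes z: "z \<in> bidisc" and h: "0 < h" "h \<le> 1/2"
    and A1: "h \<le> norm (1 - fst z * complex_of_real (1-h))"
    and A2: "h \<le> norm (1 - snd z * complex_of_real (1-h))"
    and w: "w \<in> Qb h \<times> Qb h"
  shows "norm (bergman_kernel z w - bergman_kernel z (complex_of_real (1-h), complex_of_real (1-h)))
          \<le> norm (bergman_kernel z (complex_of_real (1-h), complex_of_real (1-h))) / 2"
proof -
  define t where "t = complex_of_real (1-h)"
  have ct: "cnj t = t" by (simp add: t_def)
  have z1: "norm (fst z) < 1" and z2: "norm (snd z) < 1" using z by (auto simp: bidisc_def)
  have w1: "norm (fst w - t) < h/20" and w2: "norm (snd w - t) < h/20"
    using w Qb_props[OF h] by (auto simp: t_def)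
  have d: "norm ((1 - a * cnj v) - (1 - a * t)) \<le> norm (v - t)" if "norm a < 1" for a v
  proof -
    have "(1 - a * cnj v) - (1 - a * t) = - (a * cnj (v - t))" by (simp add: ct algebra_simps)
    moreover have "norm (cnj (v - t)) = norm (v - t)" by (rule complex_mod_cnj)
    ultimately have "norm ((1 - a * cnj v) - (1 - a * t)) = norm a * norm (v - t)"
      by (simp only: norm_minus_cancel norm_mult)
    also have "\<dots> \<le> 1 * norm (v - t)" using that by (intro mult_right_mono) auto
    finally show ?thesis by simp
  qed
  have A10: "1 - fst z * t \<noteq> 0" and A20: "1 - snd z * t \<noteq> 0" using A1 A2 h by (auto simp: t_def)
  have "norm (1/((1 - fst z * cnj (fst w))^2 * (1 - snd z * cnj (snd w))^2) - 1/((1 - fst z * t)^2 * (1 - snd z * t)^2))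
        \<le> 1/2 * norm (1/((1 - fst z * t)^2 * (1 - snd z * t)^2))"
  proof (rule kernel_approx[OF A10 A20])
    show "norm ((1 - fst z * cnj (fst w)) - (1 - fst z * t)) \<le> norm (1 - fst z * t) / 20"
      using d[OF z1, of "fst w"] w1 A1 unfolding t_def by linarith
    show "norm ((1 - snd z * cnj (snd w)) - (1 - snd z * t)) \<le> norm (1 - snd z * t) / 20"
      using d[OF z2, of "snd w"] w2 A2 unfolding t_def by linarith
  qed
  thus ?thesis unfolding kernel_split t_def[symmetric] fst_conv snd_conv ct
    by (rule scale_bound)
qed

lemma Qb_open: "open (Qb h)" unfolding Qb_def by (rule open_box)

lemma QQ_sub: "0 < h \<Longrightarrow> h \<le> 1/2 \<Longrightarrow> Qb h \<times> Qb h \<subseteq> bidisc"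
  using Qb_props(2) by (auto simp: bidisc_def)

lemma QQ_fin: "emeasure lborel (Qb h \<times> Qb h) < \<infinity>"
  by (intro emeasure_bounded_finite bounded_Times) (auto simp: Qb_def)

lemma proj_lower:
  assumes z: "z \<in> bidisc" and h: "0 < h" "h \<le> 1/2"
    and A1: "h \<le> norm (1 - fst z * complex_of_real (1-h))"
    and A2: "h \<le> norm (1 - snd z * complex_of_real (1-h))"
  shows "measure lborel (Qb h \<times> Qb h) / 2 * norm (bergman_kernel z (complex_of_real (1-h), complex_of_real (1-h)))
         \<le> norm (bergman_proj (\<lambda>w. complex_of_real (indicator (Qb h \<times> Qb h) w)) z)"
proof -
  define QQ where "QQ = Qb h \<times> Qb h"
  define K0 where "K0 = bergman_kernel z (complex_of_real (1-h), complex_of_real (1-h))"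
  define M where "M = lebesgue_on bidisc"
  define m where "m = measure lborel QQ"
  have QQsub: "QQ \<subseteq> bidisc" using QQ_sub[OF h] by (simp add: QQ_def)
  have QQb[measurable]: "QQ \<in> sets borel" unfolding QQ_def by (intro borel_open open_Times Qb_open)
  have QQl: "QQ \<in> sets lebesgue" using QQb by simp
  have QQM[measurable]: "QQ \<in> sets M" unfolding M_def using QQl QQsub by (simp add: sets_restrict_space_iff)
  have emM: "emeasure M QQ = emeasure lborel QQ" unfolding M_def using QQb QQsub
    by (simp add: emeasure_restrict_space)
  have fin: "emeasure M QQ < \<infinity>" unfolding emM unfolding QQ_def by (rule QQ_fin)
  have mM: "measure M QQ = m" using emM by (simp add: measure_def m_def)
  have Km[measurable]: "(\<lambda>w. bergman_kernel z w) \<in> borel_measurable M"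
    unfolding M_def by (rule measurable_restrict_space1) (simp add: measurable_completion)
  have near: "norm (bergman_kernel z w - K0) \<le> norm K0 / 2" if "w \<in> QQ" for w
    using kernel_near[OF z h A1 A2, of w] that by (simp add: QQ_def K0_def)
  have int1: "integrable M (\<lambda>w. indicator QQ w *\<^sub>R K0)"
    by (rule integrableI_bounded_set_indicator[where B="norm K0"]) (use fin in auto)
  have int2: "integrable M (\<lambda>w. indicator QQ w *\<^sub>R (bergman_kernel z w - K0))"
    by (rule integrableI_bounded_set_indicator[where B="norm K0 / 2"]) (use fin near in auto)
  have int3: "integrable M (\<lambda>w. indicator QQ w *\<^sub>R (norm K0 / 2))"
    by (rule integrableI_bounded_set_indicator[where B="norm K0 / 2"]) (use fin in auto)
  have intI: "integrable M (indicator QQ :: _ \<Rightarrow> real)"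
    by (rule integrable_real_indicator[OF QQM fin])
  have eq: "bergman_proj (\<lambda>w. complex_of_real (indicator (Qb h \<times> Qb h) w)) z
      = integral\<^sup>L M (\<lambda>w. indicator QQ w *\<^sub>R K0) + integral\<^sup>L M (\<lambda>w. indicator QQ w *\<^sub>R (bergman_kernel z w - K0))"
  proof -
    have "bergman_proj (\<lambda>w. complex_of_real (indicator (Qb h \<times> Qb h) w)) z
        = integral\<^sup>L M (\<lambda>w. indicator QQ w *\<^sub>R K0 + indicator QQ w *\<^sub>R (bergman_kernel z w - K0))"
      unfolding bergman_proj_def M_def QQ_def
      by (intro Bochner_Integration.integral_cong refl) (simp add: scaleR_conv_of_real algebra_simps)
    also have "\<dots> = integral\<^sup>L M (\<lambda>w. indicator QQ w *\<^sub>R K0) + integral\<^sup>L M (\<lambda>w. indicator QQ w *\<^sub>R (bergman_kernel z w - K0))"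
      by (rule Bochner_Integration.integral_add[OF int1 int2])
    finally show ?thesis .
  qed
  have i1: "integral\<^sup>L M (\<lambda>w. indicator QQ w *\<^sub>R K0) = m *\<^sub>R K0"
    using intI QQM by (simp add: mM Int_absorb2 sets.sets_into_space)
  have "norm (integral\<^sup>L M (\<lambda>w. indicator QQ w *\<^sub>R (bergman_kernel z w - K0)))
      \<le> integral\<^sup>L M (\<lambda>w. indicator QQ w *\<^sub>R (norm K0 / 2))"
    by (rule Bochner_Integration.integral_norm_bound_integral[OF int2 int3]) (use near in \<open>auto simp: indicator_def\<close>)
  also have "\<dots> = m * (norm K0 / 2)"
    using intI QQM by (simp add: mM Int_absorb2 sets.sets_into_space)
  finally have i2: "norm (integral\<^sup>L M (\<lambda>w. indicator QQ w *\<^sub>R (bergman_kernel z w - K0))) \<le> m * (norm K0 / 2)" .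
  have m0: "0 \<le> m" by (simp add: m_def)
  have "norm (m *\<^sub>R K0) - norm (integral\<^sup>L M (\<lambda>w. indicator QQ w *\<^sub>R (bergman_kernel z w - K0)))
        \<le> norm (m *\<^sub>R K0 + integral\<^sup>L M (\<lambda>w. indicator QQ w *\<^sub>R (bergman_kernel z w - K0)))"
    by (rule norm_diff_ineq)
  moreover have "norm (m *\<^sub>R K0) = m * norm K0" using m0 by simp
  moreover have "norm (bergman_proj (\<lambda>w. complex_of_real (indicator (Qb h \<times> Qb h) w)) z)
     = norm (m *\<^sub>R K0 + integral\<^sup>L M (\<lambda>w. indicator QQ w *\<^sub>R (bergman_kernel z w - K0)))"
    unfolding eq i1 ..
  moreover have "norm (integral\<^sup>L M (\<lambda>w. indicator QQ w *\<^sub>R (bergman_kernel z w - K0))) \<le> m * norm K0 / 2"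
    using i2 by simp
  ultimately have "m * norm K0 / 2 \<le> norm (bergman_proj (\<lambda>w. complex_of_real (indicator (Qb h \<times> Qb h) w)) z)"
    by linarith
  thus ?thesis by (simp add: m_def QQ_def K0_def)
qed

lemma fst_meas[measurable]: "(fst :: ('a::euclidean_space \<times> 'b::euclidean_space) \<Rightarrow> 'a) \<in> borel_measurable borel"
  by (intro borel_measurable_continuous_onI continuous_intros)
lemma snd_meas[measurable]: "(snd :: ('a::euclidean_space \<times> 'b::euclidean_space) \<Rightarrow> 'b) \<in> borel_measurable borel"
  by (intro borel_measurable_continuous_onI continuous_intros)

lemma proj_meas:
  assumes [measurable]: "QQ \<in> sets borel"
  shows "(\<lambda>z. bergman_proj (\<lambda>w. complex_of_real (indicator QQ w)) z) \<in> borel_measurable borel"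
proof -
  have eq: "bergman_proj (\<lambda>w. complex_of_real (indicator QQ w)) z =
     integral\<^sup>L lborel (\<lambda>w. indicator bidisc w *\<^sub>R (bergman_kernel z w * complex_of_real (indicator QQ w)))" for z
  proof -
    have "bergman_proj (\<lambda>w. complex_of_real (indicator QQ w)) z =
      integral\<^sup>L lebesgue (\<lambda>w. indicator bidisc w *\<^sub>R (bergman_kernel z w * complex_of_real (indicator QQ w)))"
      unfolding bergman_proj_def by (rule integral_restrict_space) simp
    also have "\<dots> = integral\<^sup>L lborel (\<lambda>w. indicator bidisc w *\<^sub>R (bergman_kernel z w * complex_of_real (indicator QQ w)))"
      by (rule integral_completion) measurable
    finally show ?thesis .
  qed
  have mc: "measurable (borel \<Otimes>\<^sub>M lborel) (borel :: complex measure) = measurable (borel \<Otimes>\<^sub>M borel) (borel :: complex measure)"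
    by (intro measurable_cong_sets sets_pair_measure_cong) auto
  have k[measurable]: "(\<lambda>x. bergman_kernel (fst x) (snd x)) \<in> borel_measurable (borel \<Otimes>\<^sub>M lborel)"
    unfolding mc borel_prod by (rule kernel_meas2)
  have "(\<lambda>z. integral\<^sup>L lborel (\<lambda>w. indicator bidisc w *\<^sub>R (bergman_kernel z w * complex_of_real (indicator QQ w))))
        \<in> borel_measurable borel"
    by (rule lborel.borel_measurable_lebesgue_integral) (simp add: split_beta', measurable)
  thus ?thesis unfolding eq .
qed

lemma Sb_borel[measurable]: "Sb s \<in> sets borel" unfolding Sb_def by simp
lemma Qb_borel[measurable]: "Qb s \<in> sets borel" unfolding Qb_def by simp

lemma SS_borel: "Sb a \<times> Sb b \<in> sets borel"
  unfolding Sb_def by (intro borel_open open_Times open_box)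

lemma Sb_meas: "0 < s \<Longrightarrow> emeasure lborel (Sb s) = ennreal (s/2 * s)"
  unfolding Sb_def box_meas by (simp add: field_simps)

lemma Qb_meas: "0 < h \<Longrightarrow> emeasure lborel (Qb h) = ennreal (h/20 * (h/20))"
  unfolding Qb_def box_meas by (simp add: field_simps)

lemma Sb_disj:
  assumes "j < (k::nat)"
  shows "Sb ((1/2)^j) \<inter> Sb ((1/2)^k) = {}"
proof -
  have "((1/2::real)^k) \<le> (1/2)^(Suc j)" using assms by (intro power_decreasing) auto
  hence "(1::real) - (1/2)^j/2 \<le> 1 - (1/2)^k" by simp
  thus ?thesis by (auto simp: mem_Sb)
qed

lemma T_meas:
  "emeasure lborel (\<Union>j\<in>{1..<n}. Sb ((1/2)^j) \<times> Sb ((1/2)^(n-j))) = ennreal (real (n-1) * (((1/2::real)^n)^2/4))"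
proof -
  have disj: "disjoint_family_on (\<lambda>j. Sb ((1/2)^j) \<times> Sb ((1/2::real)^(n-j))) {1..<n}"
    unfolding disjoint_family_on_def
  proof (intro ballI impI)
    fix j k assume "j \<in> {1..<n}" "k \<in> {1..<n}" "j \<noteq> k"
    hence "Sb ((1/2)^j) \<inter> Sb ((1/2::real)^k) = {}"
      using Sb_disj[of j k] Sb_disj[of k j] by (cases "j < k") (auto simp: Int_commute)
    thus "(Sb ((1/2)^j) \<times> Sb ((1/2::real)^(n-j))) \<inter> (Sb ((1/2)^k) \<times> Sb ((1/2::real)^(n-k))) = {}" by auto
  qed
  have each: "emeasure lborel (Sb ((1/2)^j) \<times> Sb ((1/2::real)^(n-j))) = ennreal (((1/2::real)^n)^2/4)"
    if "j \<in> {1..<n}" for j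
  proof -
    have "(1/2::real)^j * (1/2)^(n-j) = (1/2)^n" using that by (simp add: power_add[symmetric])
    hence "((1/2::real)^j/2 * (1/2)^j) * ((1/2)^(n-j)/2 * (1/2)^(n-j)) = ((1/2::real)^n)^2/4"
      by (simp add: power2_eq_square field_simps)
    moreover have "emeasure lborel (Sb ((1/2)^j) \<times> Sb ((1/2::real)^(n-j)))
        = ennreal (((1/2::real)^j/2 * (1/2)^j) * ((1/2)^(n-j)/2 * (1/2)^(n-j)))"
    proof -
      have "emeasure lborel (Sb ((1/2)^j) \<times> Sb ((1/2::real)^(n-j)))
          = emeasure lborel (Sb ((1/2)^j)) * emeasure lborel (Sb ((1/2::real)^(n-j)))"
        by (simp add: prod_meas)
      also have "\<dots> = ennreal ((1/2::real)^j/2 * (1/2)^j) * ennreal ((1/2)^(n-j)/2 * (1/2)^(n-j))"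
        by (subst Sb_meas, simp)+ (rule refl)
      also have "\<dots> = ennreal (((1/2::real)^j/2 * (1/2)^j) * ((1/2)^(n-j)/2 * (1/2)^(n-j)))"
        by (rule ennreal_mult[symmetric]) auto
      finally show ?thesis .
    qed
    ultimately show ?thesis by simp
  qed
  have "emeasure lborel (\<Union>j\<in>{1..<n}. Sb ((1/2)^j) \<times> Sb ((1/2::real)^(n-j)))
      = (\<Sum>j\<in>{1..<n}. emeasure lborel (Sb ((1/2)^j) \<times> Sb ((1/2::real)^(n-j))))"
    by (rule sum_emeasure[symmetric, OF _ disj]) (auto intro: SS_borel)
  also have "\<dots> = (\<Sum>j\<in>{1..<n}. ennreal (((1/2::real)^n)^2/4))"
    using each by (rule sum.cong[OF refl])
  also have "\<dots> = ennreal (real (n-1) * (((1/2::real)^n)^2/4))"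
    by (simp add: ennreal_of_nat_eq_real_of_nat ennreal_mult[symmetric] del: ennreal_mult)
  finally show ?thesis .
qed

lemma K0_norm:
  "norm (bergman_kernel z (complex_of_real r, complex_of_real r)) =
    1 / (pi^2 * (norm (1 - fst z * complex_of_real r) * norm (1 - snd z * complex_of_real r))^2)"
  by (simp add: bergman_kernel_def norm_mult norm_divide norm_power power_mult_distrib power2_eq_square)

theorem theorem3p1:
  shows "\<not> (\<exists>C::real. C > 0 \<and>
           (\<forall>f :: complex \<times> complex \<Rightarrow> complex.
              f \<in> borel_measurable (lebesgue_on bidisc) \<longrightarrow>
              (\<exists>B. \<forall>w\<in>bidisc. norm (f w) \<le> B) \<longrightarrow>
              (\<forall>lam::real. lam > 0 \<longrightarrow>
                 emeasure lebesgue {z \<in> bidisc. norm (bergman_proj f z) > lam}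
                   \<le> ennreal (C * (LINT w | lebesgue_on bidisc. norm (f w)) / lam))))"
proof
  assume "\<exists>C::real. C > 0 \<and>
           (\<forall>f :: complex \<times> complex \<Rightarrow> complex.
              f \<in> borel_measurable (lebesgue_on bidisc) \<longrightarrow>
              (\<exists>B. \<forall>w\<in>bidisc. norm (f w) \<le> B) \<longrightarrow>
              (\<forall>lam::real. lam > 0 \<longrightarrow>
                 emeasure lebesgue {z \<in> bidisc. norm (bergman_proj f z) > lam}
                   \<le> ennreal (C * (LINT w | lebesgue_on bidisc. norm (f w)) / lam)))"
  then obtain C :: real where C: "C > 0" and H: "\<And>f :: complex \<times> complex \<Rightarrow> complex.
              f \<in> borel_measurable (lebesgue_on bidisc) \<Longrightarrow>
              (\<exists>B. \<forall>w\<in>bidisc. norm (f w) \<le> B) \<Longrightarrow>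
              (\<forall>lam::real. lam > 0 \<longrightarrow>
                 emeasure lebesgue {z \<in> bidisc. norm (bergman_proj f z) > lam}
                   \<le> ennreal (C * (LINT w | lebesgue_on bidisc. norm (f w)) / lam))" by blast
  define n where "n = nat \<lceil>256 * pi^2 * C\<rceil> + 2"
  have n2: "n \<ge> 2" by (simp add: n_def)
  have nC: "real n - 1 > 256 * pi^2 * C"
  proof -
    have "256 * pi^2 * C \<le> real (nat \<lceil>256 * pi^2 * C\<rceil>)" by linarith
    thus ?thesis by (simp add: n_def)
  qed
  define h :: real where "h = (1/2)^n"
  have h0: "0 < h" by (simp add: h_def)
  have h12: "h \<le> 1/2"
  proof -
    have "(1/2::real)^n \<le> (1/2)^1" using n2 by (intro power_decreasing) auto
    thus ?thesis by (simp add: h_def)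
  qed
  define QQ where "QQ = Qb h \<times> Qb h"
  define f where "f = (\<lambda>w. complex_of_real (indicator QQ w))"
  define m where "m = measure lborel QQ"
  have QQb[measurable]: "QQ \<in> sets borel" unfolding QQ_def by (intro borel_open open_Times Qb_open)
  have QQsub: "QQ \<subseteq> bidisc" using QQ_sub[OF h0 h12] by (simp add: QQ_def)
  have emQQ: "emeasure lborel QQ = ennreal ((h/20 * (h/20)) * (h/20 * (h/20)))"
  proof -
    have "emeasure lborel QQ = emeasure lborel (Qb h) * emeasure lborel (Qb h)"
      unfolding QQ_def by (simp add: prod_meas)
    also have "\<dots> = ennreal (h/20 * (h/20)) * ennreal (h/20 * (h/20))"
      using h0 by (subst Qb_meas, simp)+ (rule refl)
    also have "\<dots> = ennreal ((h/20 * (h/20)) * (h/20 * (h/20)))"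
      by (rule ennreal_mult[symmetric]) auto
    finally show ?thesis .
  qed
  have m_eq: "m = (h/20 * (h/20)) * (h/20 * (h/20))"
    unfolding m_def measure_def emQQ using h0 by simp
  have m0: "0 < m" using h0 unfolding m_eq by simp
  define lam where "lam = m / (64 * pi^2 * h^2)"
  have lam0: "lam > 0" using m0 h0 by (simp add: lam_def)
  have fmeas: "f \<in> borel_measurable (lebesgue_on bidisc)"
    unfolding f_def by (rule measurable_restrict_space1) (simp add: measurable_completion)
  have fbnd: "\<exists>B. \<forall>w\<in>bidisc. norm (f w) \<le> B"
    by (rule exI[of _ 1]) (auto simp: f_def indicator_def)
  have ineq: "emeasure lebesgue {z \<in> bidisc. norm (bergman_proj f z) > lam}
                   \<le> ennreal (C * (LINT w | lebesgue_on bidisc. norm (f w)) / lam)"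
    using H[OF fmeas fbnd] lam0 by blast
  have L1: "(LINT w | lebesgue_on bidisc. norm (f w)) = m"
  proof -
    have "(LINT w | lebesgue_on bidisc. norm (f w)) = (LINT w | lebesgue_on bidisc. indicator QQ w)"
      by (simp add: f_def)
    also have "\<dots> = measure (lebesgue_on bidisc) QQ"
      using QQsub by (simp add: Int_absorb2)
    also have "\<dots> = m"
      using QQsub QQb by (simp add: measure_restrict_space m_def)
    finally show ?thesis .
  qed
  have rhs: "C * (LINT w | lebesgue_on bidisc. norm (f w)) / lam = 64 * pi^2 * C * h^2"
    unfolding L1 lam_def using m0 h0 by (simp add: field_simps)
  define T where "T = (\<Union>j\<in>{1..<n}. Sb ((1/2)^j) \<times> Sb ((1/2::real)^(n-j)))"
  define L where "L = {z \<in> bidisc. norm (bergman_proj f z) > lam}"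
  have Tb: "T \<in> sets borel" unfolding T_def by (auto intro: SS_borel)
  have Lb: "L \<in> sets borel"
  proof -
    have [measurable]: "(\<lambda>z. bergman_proj f z) \<in> borel_measurable borel"
      unfolding f_def by (rule proj_meas[OF QQb])
    show ?thesis unfolding L_def by measurable
  qed
  have TL: "T \<subseteq> L"
  proof
    fix z assume "z \<in> T"
    then obtain j where j: "j \<in> {1..<n}" and z1: "fst z \<in> Sb ((1/2)^j)" and z2: "snd z \<in> Sb ((1/2)^(n-j))"
      unfolding T_def by auto
    define s1 :: real where "s1 = (1/2)^j"
    define s2 :: real where "s2 = (1/2)^(n-j)"
    have s12: "s1 * s2 = h" using j unfolding s1_def s2_def h_def by (simp add: power_add[symmetric])
    have s1p: "0 < s1" "s1 \<le> 1" by (auto simp: s1_def power_le_one)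
    have s2p: "0 < s2" "s2 \<le> 1" by (auto simp: s2_def power_le_one)
    have hs1: "h \<le> s1/2"
    proof -
      have "(1/2::real)^n \<le> (1/2)^(Suc j)" using j by (intro power_decreasing) auto
      thus ?thesis by (simp add: h_def s1_def)
    qed
    have hs2: "h \<le> s2/2"
    proof -
      have "(1/2::real)^n \<le> (1/2)^(Suc (n-j))" using j by (intro power_decreasing) auto
      thus ?thesis by (simp add: h_def s2_def)
    qed
    note P1 = Sb_props[OF s1p h0 hs1 z1[folded s1_def]]
    note P2 = Sb_props[OF s2p h0 hs2 z2[folded s2_def]]
    have zb: "z \<in> bidisc" using P1(1) P2(1) by (cases z) (auto simp: bidisc_def)
    define a1 where "a1 = norm (1 - fst z * complex_of_real (1-h))"
    define a2 where "a2 = norm (1 - snd z * complex_of_real (1-h))"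
    have a1b: "h \<le> a1" "a1 \<le> 2 * s1" using P1 hs1 unfolding a1_def by linarith+
    have a2b: "h \<le> a2" "a2 \<le> 2 * s2" using P2 hs2 unfolding a2_def by linarith+
    have low: "m / 2 * norm (bergman_kernel z (complex_of_real (1-h), complex_of_real (1-h))) \<le> norm (bergman_proj f z)"
      using proj_lower[OF zb h0 h12 a1b(1)[unfolded a1_def] a2b(1)[unfolded a2_def]]
      by (simp add: f_def QQ_def m_def)
    have kn: "norm (bergman_kernel z (complex_of_real (1-h), complex_of_real (1-h))) = 1 / (pi^2 * (a1 * a2)^2)"
      unfolding K0_norm a1_def a2_def ..
    have aa: "0 < a1 * a2" "a1 * a2 \<le> 4 * h" 
    proof -
      show "0 < a1 * a2" using a1b a2b h0 by simp
      have "a1 * a2 \<le> (2 * s1) * (2 * s2)" using a1b a2b h0 by (intro mult_mono) auto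
      thus "a1 * a2 \<le> 4 * h" using s12 by (simp add: algebra_simps)
    qed
    have "(a1 * a2)^2 \<le> (4 * h)^2" using aa by (intro power_mono) auto
    hence "pi^2 * (a1 * a2)^2 \<le> pi^2 * (16 * h^2)" by (simp add: power_mult_distrib)
    hence "1 / (pi^2 * (16 * h^2)) \<le> 1 / (pi^2 * (a1 * a2)^2)"
    proof (rule divide_left_mono)
      have "0 < pi^2 * (16 * h^2)" using h0 by simp
      moreover have "0 < pi^2 * (a1 * a2)^2" using zero_less_power[OF aa(1), of 2] by simp
      ultimately show "0 < pi^2 * (16 * h^2) * (pi^2 * (a1 * a2)^2)" by (rule mult_pos_pos)
    qed simp_all
    hence "m / 2 * (1 / (pi^2 * (16 * h^2))) \<le> m / 2 * (1 / (pi^2 * (a1 * a2)^2))"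
      using m0 by (intro mult_left_mono) auto
    moreover have "lam < m / 2 * (1 / (pi^2 * (16 * h^2)))"
      unfolding lam_def using m0 h0 by (simp add: field_simps)
    ultimately have "lam < norm (bergman_proj f z)" using low[unfolded kn] by linarith
    thus "z \<in> L" using zb by (simp add: L_def)
  qed
  have "emeasure lebesgue T \<le> emeasure lebesgue L"
    by (rule emeasure_mono[OF TL]) (use Lb in simp)
  also have "\<dots> \<le> ennreal (64 * pi^2 * C * h^2)" using ineq rhs by (simp add: L_def)
  finally have "emeasure lborel T \<le> ennreal (64 * pi^2 * C * h^2)" using Tb by simp
  hence "ennreal (real (n-1) * (h^2/4)) \<le> ennreal (64 * pi^2 * C * h^2)"
    using T_meas[of n] by (simp add: T_def h_def)
  hence "real (n-1) * (h^2/4) \<le> 64 * pi^2 * C * h^2"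
    using C by (subst (asm) ennreal_le_iff) auto
  hence "real (n-1) \<le> 256 * pi^2 * C" using h0 by (simp add: field_simps)
  moreover have "real (n-1) = real n - 1" using n2 by simp
  ultimately show False using nC by linarith
qed
end
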